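(* Let $\xi,\eta\in\mathrm{SL}(2,\mathbb{R})$ with $\gamma:=\xi\eta\xi^{-1}\eta^{-1}$ elliptic, let $p\in\mathbf{H}^2$ be the fixed point of $\gamma$, and set $p_4=p$, $p_3=\eta^{-1}p$, $p_2=\xi^{-1}\eta^{-1}p$, $p_1=\eta\xi^{-1}\eta^{-1}p$. Then the four points $p_1,p_2,p_3,p_4$ do not all lie on a single geodesic of $\mathbf{H}^2$.
   Context: $\mathrm{SL}(2,\mathbb{R})$ acts on the hyperbolic plane $\mathbf{H}^2$ by isometries via Möbius transformations; an element is elliptic if it fixes exactly one point of $\mathbf{H}^2$ (equivalently $|\mathrm{tr}|<2$). *)

theory Defs
  imports "HOL-Analysis.Analysis"
begin

definition SL2 :: "(real^2^2) set" where
  "SL2 = {A. det A = 1}"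

definition H2 :: "complex set" where
  "H2 = {z. Im z > 0}"

definition mobius :: "real^2^2 \<Rightarrow> complex \<Rightarrow> complex" where
  "mobius A z = (complex_of_real (A$1$1) * z + complex_of_real (A$1$2)) /
                (complex_of_real (A$2$1) * z + complex_of_real (A$2$2))"

definition elliptic :: "real^2^2 \<Rightarrow> bool" where
  "elliptic A \<longleftrightarrow> (\<exists>!z. z \<in> H2 \<and> mobius A z = z)"

definition geodesic :: "complex set \<Rightarrow> bool" where
  "geodesic G \<longleftrightarrow>
     (\<exists>c::real. G = {z \<in> H2. Re z = c}) \<or>
     (\<exists>c r::real. r > 0 \<and> G = {z \<in> H2. cmod (z - complex_of_real c) = r})"

end

theory Submission
  imports Defs
begin


lemma mult2: "((A::real^2^2) ** B)$i$j = A$i$1*B$1$j + A$i$2*B$2$j"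
  by (simp add: matrix_matrix_mult_def sum_2)

lemma mat2_eq: "(A::real^2^2) = B \<longleftrightarrow> A$1$1=B$1$1 \<and> A$1$2=B$1$2 \<and> A$2$1=B$2$1 \<and> A$2$2=B$2$2"
  by (auto simp: vec_eq_iff forall_2)

lemma mat1_2: "(mat 1 :: real^2^2)$1$1 = 1" "(mat 1 :: real^2^2)$1$2 = 0"
   "(mat 1 :: real^2^2)$2$1 = 0" "(mat 1 :: real^2^2)$2$2 = 1"
  by (simp_all add: mat_def)

definition adj2 :: "real^2^2 \<Rightarrow> real^2^2" where
  "adj2 A = (\<chi> i j. if i = 1 then (if j = 1 then A$2$2 else - A$1$2) else (if j = 1 then - A$2$1 else A$1$1))"

lemma adj2_simps[simp]: "adj2 A $1$1 = A$2$2" "adj2 A $1$2 = - A$1$2" "adj2 A $2$1 = - A$2$1" "adj2 A $2$2 = A$1$1"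
  by (simp_all add: adj2_def)

lemma inv2:
  assumes "det (A::real^2^2) = 1"
  shows "A ** matrix_inv A = mat 1" "matrix_inv A ** A = mat 1" "det (matrix_inv A) = 1"
proof -
  have d: "A$1$1*A$2$2 - A$1$2*A$2$1 = 1" using assms by (simp add: det_2)
  have e: "A ** adj2 A = mat 1 \<and> adj2 A ** A = mat 1"
    using d by (simp add: mat2_eq mult2 mat1_2 algebra_simps)
  then have "A ** matrix_inv A = mat 1 \<and> matrix_inv A ** A = mat 1"
    unfolding matrix_inv_def by (rule someI)
  then show "A ** matrix_inv A = mat 1" "matrix_inv A ** A = mat 1" by auto
  then have "det A * det (matrix_inv A) = 1" by (metis det_mul det_I)
  then show "det (matrix_inv A) = 1" using assms by simp
qed

lemma den_nz:
  assumes "det (A::real^2^2) = 1" "Im z > 0"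
  shows "(A$2$1 * Re z + A$2$2)^2 + (A$2$1 * Im z)^2 > 0"
proof -
  have d: "A$1$1*A$2$2 - A$1$2*A$2$1 = 1" using assms by (simp add: det_2)
  show ?thesis
  proof (cases "A$2$1 = 0")
    case True
    then have "A$2$2 \<noteq> 0" using d by auto
    then show ?thesis using True by simp
  next
    case False
    then have "(A$2$1 * Im z)^2 > 0" using assms by simp
    then show ?thesis by (smt (verit) zero_le_power2)
  qed
qed

lemma cden_nz:
  assumes "det (A::real^2^2) = 1" "Im z > 0"
  shows "complex_of_real (A$2$1) * z + complex_of_real (A$2$2) \<noteq> 0"
proof
  assume "complex_of_real (A$2$1) * z + complex_of_real (A$2$2) = 0"
  then have "Re (complex_of_real (A$2$1) * z + complex_of_real (A$2$2)) = 0"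
      "Im (complex_of_real (A$2$1) * z + complex_of_real (A$2$2)) = 0" by simp_all
  then have "A$2$1 * Re z + A$2$2 = 0" "A$2$1 * Im z = 0" by simp_all
  then show False using den_nz[OF assms] by simp
qed

lemma mob_Re:
  "Re (mobius A z) = ((A$1$1 * Re z + A$1$2) * (A$2$1 * Re z + A$2$2) + A$1$1 * A$2$1 * (Im z)^2)
     / ((A$2$1 * Re z + A$2$2)^2 + (A$2$1 * Im z)^2)"
  by (simp add: mobius_def Re_divide power2_eq_square algebra_simps)

lemma mob_Im:
  "Im (mobius A z) = (A$1$1*A$2$2 - A$1$2*A$2$1) * Im z
     / ((A$2$1 * Re z + A$2$2)^2 + (A$2$1 * Im z)^2)"
  by (simp add: mobius_def Im_divide power2_eq_square algebra_simps)

lemma mob_H2: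
  assumes "det (A::real^2^2) = 1" "z \<in> H2"
  shows "mobius A z \<in> H2"
proof -
  have d: "A$1$1*A$2$2 - A$1$2*A$2$1 = 1" using assms by (simp add: det_2)
  have "Im z > 0" using assms by (simp add: H2_def)
  then show ?thesis using den_nz[OF assms(1)] d by (simp add: H2_def mob_Im)
qed

lemma mob_comp:
  assumes "det (A::real^2^2) = 1" "det B = 1" "z \<in> H2"
  shows "mobius (A ** B) z = mobius A (mobius B z)"
proof -
  have z: "Im z > 0" using assms by (simp add: H2_def)
  have w: "Im (mobius B z) > 0" using mob_H2[OF assms(2,3)] by (simp add: H2_def)
  note n1 = cden_nz[OF assms(2) z] and n2 = cden_nz[OF assms(1) w]
  have dAB: "det (A ** B) = 1" using assms by (simp add: det_mul)
  note n3 = cden_nz[OF dAB z]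
  have n2': "complex_of_real (A$2$1) * (complex_of_real (B$1$1) * z + complex_of_real (B$1$2)) + complex_of_real (A$2$2) * (complex_of_real (B$2$1) * z + complex_of_real (B$2$2)) \<noteq> 0"
    using n3 by (simp add: mult2 algebra_simps)
  define u where "u = complex_of_real (B$1$1) * z + complex_of_real (B$1$2)"
  define v where "v = complex_of_real (B$2$1) * z + complex_of_real (B$2$2)"
  have v: "v \<noteq> 0" using n1 v_def by simp
  have e1: "complex_of_real (A$1$1) * (u/v) + complex_of_real (A$1$2) = (complex_of_real (A$1$1) * u + complex_of_real (A$1$2) * v)/v"
    using v by (simp add: field_simps)
  have e2: "complex_of_real (A$2$1) * (u/v) + complex_of_real (A$2$2) = (complex_of_real (A$2$1) * u + complex_of_real (A$2$2) * v)/v"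
    using v by (simp add: field_simps)
  have "mobius A (mobius B z) = (complex_of_real (A$1$1) * u + complex_of_real (A$1$2) * v) / (complex_of_real (A$2$1) * u + complex_of_real (A$2$2) * v)"
    unfolding mobius_def u_def[symmetric] v_def[symmetric] e1 e2 using v by simp
  also have "\<dots> = mobius (A ** B) z"
    unfolding mobius_def u_def v_def by (simp add: mult2 algebra_simps)
  finally show ?thesis by simp
qed

lemma mob_id: "mobius (mat 1) z = z"
  by (simp add: mobius_def mat1_2)

definition FF :: "real^2^2 \<Rightarrow> complex \<Rightarrow> real" where
  "FF Q z = Q$1$1 * (cmod z)^2 + (Q$1$2 + Q$2$1) * Re z + Q$2$2"

definition PB :: "real^2^2 \<Rightarrow> real^2^2 \<Rightarrow> real^2^2" where
  "PB A Q = transpose A ** Q ** A"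

lemma PB_entries: "PB A Q $i$j = A$1$i * (Q$1$1 * A$1$j + Q$1$2 * A$2$j) + A$2$i * (Q$2$1 * A$1$j + Q$2$2 * A$2$j)"
  by (simp add: PB_def mult2 transpose_def algebra_simps)

lemma FF_pb:
  assumes "det (A::real^2^2) = 1" "Im z > 0"
  shows "FF Q (mobius A z) * ((A$2$1 * Re z + A$2$2)^2 + (A$2$1 * Im z)^2) = FF (PB A Q) z"
proof -
  define D where "D = (A$2$1 * Re z + A$2$2)^2 + (A$2$1 * Im z)^2"
  have D: "D > 0" using den_nz[OF assms] D_def by simp
  have "(cmod (mobius A z))^2 = (cmod (complex_of_real (A$1$1) * z + complex_of_real (A$1$2)))^2 / (cmod (complex_of_real (A$2$1) * z + complex_of_real (A$2$2)))^2"
    by (simp add: mobius_def norm_divide power_divide)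
  also have "\<dots> = ((A$1$1 * Re z + A$1$2)^2 + (A$1$1 * Im z)^2) / D"
    unfolding cmod_power2 D_def by simp
  finally have n: "(cmod (mobius A z))^2 = ((A$1$1 * Re z + A$1$2)^2 + (A$1$1 * Im z)^2) / D" .
  have r: "Re (mobius A z) = ((A$1$1 * Re z + A$1$2) * (A$2$1 * Re z + A$2$2) + A$1$1 * A$2$1 * (Im z)^2) / D"
    unfolding mob_Re D_def ..
  have "FF Q (mobius A z) * D = Q$1$1 * ((A$1$1 * Re z + A$1$2)^2 + (A$1$1 * Im z)^2)
     + (Q$1$2 + Q$2$1) * ((A$1$1 * Re z + A$1$2) * (A$2$1 * Re z + A$2$2) + A$1$1 * A$2$1 * (Im z)^2)
     + Q$2$2 * D"
    unfolding FF_def n r using D by (simp add: field_simps)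
  also have "\<dots> = FF (PB A Q) z"
    unfolding FF_def PB_entries D_def cmod_power2 by (simp add: power2_eq_square algebra_simps)
  finally show ?thesis unfolding D_def .
qed

lemma uniq3:
  fixes a b c a' b' c' x1 x2 r1 r2 :: real
  assumes "a*r1 + b*x1 + c = 0" "a*r2 + b*x2 + c = 0"
    "a'*r1 + b'*x1 + c' = 0" "a'*r2 + b'*x2 + c' = 0"
    "x1 \<noteq> x2 \<or> r1 \<noteq> r2" "a \<noteq> 0 \<or> b \<noteq> 0 \<or> c \<noteq> 0"
  shows "\<exists>s. a' = s*a \<and> b' = s*b \<and> c' = s*c"
proof (cases "x1 = x2")
  case True
  then have r: "r1 \<noteq> r2" using assms by auto
  have "a * (r1 - r2) = (a*r1 + b*x1 + c) - (a*r2 + b*x2 + c)" "a' * (r1 - r2) = (a'*r1 + b'*x1 + c') - (a'*r2 + b'*x2 + c')"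
    using True by (simp_all add: algebra_simps)
  then have "a * (r1 - r2) = 0" "a' * (r1 - r2) = 0" using assms by simp_all
  then have a: "a = 0" "a' = 0" using r by auto
  then have "b \<noteq> 0" using assms by auto
  moreover have "c = - b * x2" "c' = - b' * x2" using a assms True by (simp_all add: algebra_simps)
  ultimately show ?thesis using a by (intro exI[of _ "b'/b"]) (auto simp: field_simps)
next
  case False
  have e1: "a * (r1 - r2) + b * (x1 - x2) = 0" "a' * (r1 - r2) + b' * (x1 - x2) = 0"
    using assms by (auto simp: algebra_simps)
  define k where "k = (r1 - r2) / (x1 - x2)"
  have b: "b = - a * k" "b' = - a' * k"
    using e1 False unfolding k_def by (auto simp: field_simps)
  have c: "c = - a * (r1 - k * x1)" "c' = - a' * (r1 - k*x1)" using assms b by (auto simp: algebra_simps)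
  have "a \<noteq> 0" using assms b c by auto
  then show ?thesis unfolding b c by (intro exI[of _ "a'/a"]) (auto simp: field_simps)
qed

lemma H2_distinct:
  assumes "z1 \<in> H2" "z2 \<in> H2" "z1 \<noteq> z2"
  shows "Re z1 \<noteq> Re z2 \<or> (cmod z1)^2 \<noteq> (cmod z2)^2"
proof (rule ccontr)
  assume "\<not> ?thesis"
  then have e: "Re z1 = Re z2" "(Im z1)^2 = (Im z2)^2" unfolding cmod_power2 by auto
  have "Im z1 > 0" "Im z2 > 0" using assms by (auto simp: H2_def)
  then have "Im z1 = Im z2" using e(2) by (metis power2_eq_iff_nonneg less_le)
  then show False using e(1) assms(3) complex_eqI by blast
qed

lemma uniqQ:
  assumes "Q$1$2 = Q$2$1" "Q'$1$2 = Q'$2$1" "det (Q::real^2^2) < 0"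
    "z1 \<in> H2" "z2 \<in> H2" "z1 \<noteq> z2"
    "FF Q z1 = 0" "FF Q z2 = 0" "FF Q' z1 = 0" "FF Q' z2 = 0"
  shows "\<exists>s. Q' = s *\<^sub>R Q"
proof -
  have nz: "Q$1$1 \<noteq> 0 \<or> Q$1$2 + Q$2$1 \<noteq> 0 \<or> Q$2$2 \<noteq> 0"
    using assms(1,3) by (auto simp: det_2)
  obtain s where "Q'$1$1 = s * Q$1$1 \<and> Q'$1$2 + Q'$2$1 = s * (Q$1$2 + Q$2$1) \<and> Q'$2$2 = s * Q$2$2"
    using uniq3[of "Q$1$1" "(cmod z1)^2" "Q$1$2 + Q$2$1" "Re z1" "Q$2$2" "(cmod z2)^2" "Re z2"
        "Q'$1$1" "Q'$1$2 + Q'$2$1" "Q'$2$2"] assms(7-10) nz H2_distinct[OF assms(4-6)]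
    unfolding FF_def by (auto simp: algebra_simps)
  then have "Q' = s *\<^sub>R Q" using assms(1,2) by (auto simp: mat2_eq algebra_simps)
  then show ?thesis by blast
qed

lemma PB_sym: "Q$1$2 = Q$2$1 \<Longrightarrow> PB A Q $1$2 = PB A Q $2$1"
  by (simp add: PB_entries algebra_simps)

lemma det_PB: "det (A::real^2^2) = 1 \<Longrightarrow> det (PB A Q) = det Q"
  by (simp add: PB_def det_mul det_transpose)

lemma scale_sq:
  assumes "det (A::real^2^2) = 1" "det Q < 0" "PB A Q = s *\<^sub>R Q"
  shows "s^2 = 1"
proof -
  have "det (s *\<^sub>R Q) = s^2 * det Q" by (simp add: det_2 power2_eq_square algebra_simps)
  then have "s^2 * det Q = 1 * det Q" using det_PB[OF assms(1), of Q] assms(3) by simp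
  then show ?thesis using assms(2) by (metis mult_right_cancel less_irrefl)
qed


lemma PB_comp: "PB (A ** B) Q = PB B (PB A Q)"
  by (simp add: PB_def matrix_transpose_mul matrix_mul_assoc)

lemma PB_id: "PB (mat 1) Q = Q"
  by (simp add: PB_def)

lemma PB_scale: "PB (A::real^2^2) (s *\<^sub>R Q) = s *\<^sub>R PB A Q"
  by (simp add: mat2_eq PB_entries algebra_simps)

lemma tr_alg:
  fixes a b c d al q de :: real
  assumes "a*d - b*c = 1" "q^2 - al*de > 0" "al*(a-d) = -2*q*c" "al*b = -c*de" "2*q*b = de*(a-d)"
  shows "(a+d)^2 \<ge> 4"
proof -
  have D: "(a-d)^2 + 4*b*c \<ge> 0"
  proof (cases "de = 0")
    case False
    have "de^2 * ((a-d)^2 + 4*b*c) = (de*(a-d))^2 + 4*b*(c*de)*de" by (simp add: power2_eq_square algebra_simps)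
    also have "\<dots> = (2*q*b)^2 + 4*b*(-(al*b))*de"
      unfolding assms(5)[symmetric] using assms(4) by simp
    also have "\<dots> = 4*b^2*(q^2 - al*de)" by (simp add: power2_eq_square algebra_simps)
    finally have "de^2 * ((a-d)^2 + 4*b*c) \<ge> 0" using assms(2) by simp
    moreover have "de^2 > 0" using False by simp
    ultimately show ?thesis by (simp add: zero_le_mult_iff)
  next
    case de: True
    show ?thesis
    proof (cases "al = 0")
      case False
      have "al^2 * ((a-d)^2 + 4*b*c) = (al*(a-d))^2 + 4*(al*b)*c*al" by (simp add: power2_eq_square algebra_simps)
      also have "\<dots> = 4*c^2*(q^2 - al*de)"
      proof -
        have "al*b = 0" using assms(4) de by (metis mult_zero_right minus_zero)
        then show ?thesis unfolding assms(3) \<open>al*b = 0\<close> using de by (simp add: power2_eq_square algebra_simps)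
      qed
      finally have "al^2 * ((a-d)^2 + 4*b*c) \<ge> 0" using assms(2) by simp
      moreover have "al^2 > 0" using False by simp
      ultimately show ?thesis by (simp add: zero_le_mult_iff)
    next
      case True
      then have "q \<noteq> 0" using assms(2) de by auto
      then have "b = 0" "c = 0" using assms(3,5) de True by auto
      then show ?thesis by simp
    qed
  qed
  have "(a+d)^2 = (a-d)^2 + 4*b*c + 4*(a*d - b*c)" by (simp add: power2_eq_square algebra_simps)
  then show ?thesis using D assms(1) by simp
qed

lemma tr_ge:
  assumes "det (G::real^2^2) = 1" "Q$1$2 = Q$2$1" "det Q < 0" "PB G Q = Q"
  shows "(G$1$1 + G$2$2)^2 \<ge> 4"
proof -
  have d: "G$1$1*G$2$2 - G$1$2*G$2$1 = 1" using assms by (simp add: det_2)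
  define K where "K = transpose (adj2 G)"
  have K: "K ** transpose G = mat 1"
    using d by (simp add: K_def mat2_eq mult2 mat1_2 transpose_def algebra_simps)
  have "Q ** G = (K ** transpose G) ** Q ** G" by (simp add: K)
  also have "\<dots> = K ** PB G Q" by (simp add: PB_def matrix_mul_assoc)
  finally have e: "Q ** G = K ** Q" using assms(4) by simp
  have e1: "Q$1$1 * G$1$1 + Q$1$2 * G$2$1 = G$2$2 * Q$1$1 - G$2$1 * Q$2$1"
    using arg_cong[OF e, of "\<lambda>M. M$1$1"] by (simp add: mult2 K_def transpose_def)
  have e2: "Q$1$1 * G$1$2 + Q$1$2 * G$2$2 = G$2$2 * Q$1$2 - G$2$1 * Q$2$2"
    using arg_cong[OF e, of "\<lambda>M. M$1$2"] by (simp add: mult2 K_def transpose_def)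
  have e4: "Q$2$1 * G$1$2 + Q$2$2 * G$2$2 = - G$1$2 * Q$1$2 + G$1$1 * Q$2$2"
    using arg_cong[OF e, of "\<lambda>M. M$2$2"] by (simp add: mult2 K_def transpose_def)
  show ?thesis
    apply (rule tr_alg[of _ _ "G$1$2" "G$2$1" "Q$1$2" "Q$1$1" "Q$2$2"])
    using d apply simp
    using assms(2,3) apply (simp add: det_2 power2_eq_square)
    using e1 assms(2) apply (simp add: algebra_simps)
    using e2 apply (simp add: algebra_simps)
    using e4 assms(2) apply (simp add: algebra_simps)
    done
qed

lemma FIX:
  assumes "det (A::real^2^2) = 1" "z \<in> H2" "mobius A z = z"
  shows "A$2$2 = A$1$1 - 2 * A$2$1 * Re z" "A$1$2 = - A$2$1 * (Re z ^2 + Im z ^2)"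
proof -
  have y: "Im z > 0" using assms by (simp add: H2_def)
  note n = cden_nz[OF assms(1) y]
  have e: "complex_of_real (A$1$1) * z + complex_of_real (A$1$2) = z * (complex_of_real (A$2$1) * z + complex_of_real (A$2$2))"
    using assms(3) n unfolding mobius_def by (simp add: divide_eq_eq ac_simps)
  have r: "A$1$1 * Re z + A$1$2 = A$2$1 * (Re z^2 - Im z^2) + A$2$2 * Re z"
    using arg_cong[OF e, of Re] by (simp add: power2_eq_square algebra_simps)
  have i: "A$1$1 * Im z = 2 * A$2$1 * Re z * Im z + A$2$2 * Im z"
    using arg_cong[OF e, of Im] by (simp add: algebra_simps)
  then have "(A$1$1 - 2 * A$2$1 * Re z - A$2$2) * Im z = 0" by (simp add: algebra_simps)
  then have a: "A$1$1 = 2 * A$2$1 * Re z + A$2$2" using y by simp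
  then show "A$2$2 = A$1$1 - 2 * A$2$1 * Re z" by simp
  show "A$1$2 = - A$2$1 * (Re z ^2 + Im z ^2)" using r unfolding a by (simp add: power2_eq_square algebra_simps)
qed

lemma id_not_elliptic:
  assumes "\<forall>w\<in>H2. mobius G w = w"
  shows "\<not> elliptic G"
proof
  assume "elliptic G"
  then obtain z where z: "\<And>w. w \<in> H2 \<and> mobius G w = w \<Longrightarrow> w = z" unfolding elliptic_def by blast
  have "\<i> \<in> H2" "2 * \<i> \<in> H2" by (simp_all add: H2_def)
  then have "\<i> = z" "2 * \<i> = z" using z assms by auto
  then show False by (metis complex_i_not_zero mult_cancel_right1 numeral_eq_one_iff semiring_norm(85))
qed

lemma scalar_id:
  assumes "det (A::real^2^2) = 1" "A$2$1 = 0" "A$1$2 = 0" "A$2$2 = A$1$1"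
  shows "\<forall>w\<in>H2. mobius A w = w"
proof -
  have "A$1$1 \<noteq> 0" using assms by (auto simp: det_2)
  then show ?thesis using assms by (auto simp: mobius_def)
qed

lemma not_elliptic_tr:
  assumes "det (G::real^2^2) = 1" "(G$1$1 + G$2$2)^2 \<ge> 4"
  shows "\<not> elliptic G"
proof
  assume "elliptic G"
  then obtain z where z: "z \<in> H2" "mobius G z = z" unfolding elliptic_def by blast
  note f = FIX[OF assms(1) z]
  have d: "G$1$1*G$2$2 - G$1$2*G$2$1 = 1" using assms by (simp add: det_2)
  have "(G$1$1 + G$2$2)^2 - 4 = (G$1$1 - G$2$2)^2 + 4 * G$1$2 * G$2$1"
    using d by (simp add: power2_eq_square algebra_simps)
  also have "\<dots> = - 4 * (G$2$1 * Im z)^2" unfolding f by (simp add: power2_eq_square algebra_simps)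
  finally have "(G$2$1 * Im z)^2 \<le> 0" using assms(2) by linarith
  then have "G$2$1 * Im z = 0" by simp
  moreover have "Im z > 0" using z by (simp add: H2_def)
  ultimately have c: "G$2$1 = 0" by simp
  then have "\<forall>w\<in>H2. mobius G w = w" using f assms(1) by (intro scalar_id) auto
  then show False using id_not_elliptic \<open>elliptic G\<close> by blast
qed

lemma fix_two:
  assumes "det (A::real^2^2) = 1" "p \<in> H2" "q \<in> H2" "p \<noteq> q" "mobius A p = p" "mobius A q = q"
  shows "\<forall>w\<in>H2. mobius A w = w"
proof -
  note f1 = FIX[OF assms(1,2,5)] and f2 = FIX[OF assms(1,3,6)]
  have "A$2$1 * (Re p - Re q) = 0" "A$2$1 * ((cmod p)^2 - (cmod q)^2) = 0"
    using f1 f2 unfolding cmod_power2 by (simp_all add: algebra_simps)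
  then have c: "A$2$1 = 0" using H2_distinct[OF assms(2-4)] by auto
  show ?thesis using c f1 assms(1) by (intro scalar_id) auto
qed

lemma fix_commute:
  assumes "det (A::real^2^2) = 1" "det B = 1" "p \<in> H2" "mobius A p = p" "mobius B p = p"
  shows "A ** B = B ** A"
proof -
  note f1 = FIX[OF assms(1,3,4)] and f2 = FIX[OF assms(2,3,5)]
  show ?thesis unfolding mat2_eq mult2 f1 f2 by (simp add: algebra_simps)
qed



definition mk2 :: "real \<Rightarrow> real \<Rightarrow> real \<Rightarrow> real \<Rightarrow> real^2^2" where
  "mk2 a b c d = (\<chi> i j. if i = 1 then (if j = 1 then a else b) else (if j = 1 then c else d))"

lemma mk2_simps[simp]: "mk2 a b c d $1$1 = a" "mk2 a b c d $1$2 = b" "mk2 a b c d $2$1 = c" "mk2 a b c d $2$2 = d"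
  by (simp_all add: mk2_def)

lemma geo_form:
  assumes "geodesic G"
  shows "\<exists>Q. Q$1$2 = Q$2$1 \<and> det Q < 0 \<and> (\<forall>z. z \<in> G \<longleftrightarrow> z \<in> H2 \<and> FF Q z = 0)"
  using assms unfolding geodesic_def
proof (elim disjE exE conjE)
  fix c assume G: "G = {z \<in> H2. Re z = c}"
  show ?thesis
    by (rule exI[of _ "mk2 0 (1/2) (1/2) (-c)"]) (auto simp: G det_2 FF_def)
next
  fix c r :: real assume r: "r > 0" and G: "G = {z \<in> H2. cmod (z - complex_of_real c) = r}"
  have eq: "cmod (z - complex_of_real c) = r \<longleftrightarrow> FF (mk2 1 (-c) (-c) (c^2 - r^2)) z = 0" for z
  proof -
    have "cmod (z - complex_of_real c) = r \<longleftrightarrow> (cmod (z - complex_of_real c))^2 = r^2"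
      using r by (metis norm_ge_zero power2_eq_iff_nonneg less_le)
    also have "\<dots> \<longleftrightarrow> FF (mk2 1 (-c) (-c) (c^2 - r^2)) z = 0"
      unfolding cmod_power2 FF_def by (simp add: power2_eq_square algebra_simps)
    finally show ?thesis .
  qed
  show ?thesis
    by (rule exI[of _ "mk2 1 (-c) (-c) (c^2 - r^2)"]) (use r in \<open>auto simp: G det_2 eq power2_eq_square\<close>)
qed



theorem mainTheorem3:
  fixes \<xi> \<eta> :: "real^2^2" and p :: complex
  assumes "\<xi> \<in> SL2" and "\<eta> \<in> SL2"
    and "elliptic (\<xi> ** \<eta> ** matrix_inv \<xi> ** matrix_inv \<eta>)"
    and "p \<in> H2"
    and "mobius (\<xi> ** \<eta> ** matrix_inv \<xi> ** matrix_inv \<eta>) p = p"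
  shows "\<not> (\<exists>G. geodesic G \<and>
            p \<in> G \<and>
            mobius (matrix_inv \<eta>) p \<in> G \<and>
            mobius (matrix_inv \<xi> ** matrix_inv \<eta>) p \<in> G \<and>
            mobius (\<eta> ** matrix_inv \<xi> ** matrix_inv \<eta>) p \<in> G)"
proof
  assume "\<exists>G. geodesic G \<and>
            p \<in> G \<and>
            mobius (matrix_inv \<eta>) p \<in> G \<and>
            mobius (matrix_inv \<xi> ** matrix_inv \<eta>) p \<in> G \<and>
            mobius (\<eta> ** matrix_inv \<xi> ** matrix_inv \<eta>) p \<in> G"
  then obtain G where G: "geodesic G" "p \<in> G" "mobius (matrix_inv \<eta>) p \<in> G"
    "mobius (matrix_inv \<xi> ** matrix_inv \<eta>) p \<in> G"
    "mobius (\<eta> ** matrix_inv \<xi> ** matrix_inv \<eta>) p \<in> G" by blast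
  define X where "X = \<xi>"
  define Y where "Y = \<eta>"
  define Xi where "Xi = matrix_inv \<xi>"
  define Yi where "Yi = matrix_inv \<eta>"
  define g where "g = \<xi> ** \<eta> ** matrix_inv \<xi> ** matrix_inv \<eta>"
  have dX: "det X = 1" and dY: "det Y = 1" using assms(1,2) by (simp_all add: SL2_def X_def Y_def)
  have dXi: "det Xi = 1" and dYi: "det Yi = 1" using inv2 dX dY by (simp_all add: X_def Y_def Xi_def Yi_def)
  have dg: "det g = 1" using dX dY dXi dYi by (simp add: g_def X_def Y_def Xi_def Yi_def det_mul)
  have HX: "\<And>z. z \<in> H2 \<Longrightarrow> mobius X z \<in> H2" using mob_H2[OF dX] by blast
  have HY: "\<And>z. z \<in> H2 \<Longrightarrow> mobius Y z \<in> H2" using mob_H2[OF dY] by blast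
  have HXi: "\<And>z. z \<in> H2 \<Longrightarrow> mobius Xi z \<in> H2" using mob_H2[OF dXi] by blast
  have HYi: "\<And>z. z \<in> H2 \<Longrightarrow> mobius Yi z \<in> H2" using mob_H2[OF dYi] by blast
  have cX1: "\<And>z. z \<in> H2 \<Longrightarrow> mobius X (mobius Xi z) = z"
    using mob_comp[OF dX dXi] inv2(1)[OF dX] mob_id Xi_def X_def by metis
  have cX2: "\<And>z. z \<in> H2 \<Longrightarrow> mobius Xi (mobius X z) = z"
    using mob_comp[OF dXi dX] inv2(2)[OF dX] mob_id Xi_def X_def by metis
  have cY1: "\<And>z. z \<in> H2 \<Longrightarrow> mobius Y (mobius Yi z) = z"
    using mob_comp[OF dY dYi] inv2(1)[OF dY] mob_id Yi_def Y_def by metis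
  have cY2: "\<And>z. z \<in> H2 \<Longrightarrow> mobius Yi (mobius Y z) = z"
    using mob_comp[OF dYi dY] inv2(2)[OF dY] mob_id Yi_def Y_def by metis
  have gz: "mobius g z = mobius X (mobius Y (mobius Xi (mobius Yi z)))" if z: "z \<in> H2" for z
  proof -
    have d1: "det (X ** Y) = 1" "det (X ** Y ** Xi) = 1" using dX dY dXi by (simp_all add: det_mul)
    have "mobius g z = mobius (X ** Y ** Xi) (mobius Yi z)"
      unfolding g_def Xi_def[symmetric] Yi_def[symmetric] unfolding X_def[symmetric] Y_def[symmetric]
      using mob_comp[OF d1(2) dYi z] .
    also have "\<dots> = mobius (X ** Y) (mobius Xi (mobius Yi z))"
      using mob_comp[OF d1(1) dXi HYi[OF z]] .
    also have "\<dots> = mobius X (mobius Y (mobius Xi (mobius Yi z)))"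
      using mob_comp[OF dX dY HXi[OF HYi[OF z]]] .
    finally show ?thesis .
  qed
  have p: "p \<in> H2" by (rule assms(4))
  define p3 where "p3 = mobius Yi p"
  define p2 where "p2 = mobius Xi p3"
  define p1 where "p1 = mobius Y p2"
  have H3: "p3 \<in> H2" and H2': "p2 \<in> H2" and H1: "p1 \<in> H2"
    using HYi HXi HY p by (simp_all add: p1_def p2_def p3_def)
  have e2: "mobius (matrix_inv \<xi> ** matrix_inv \<eta>) p = p2"
    unfolding Xi_def[symmetric] Yi_def[symmetric] p2_def p3_def using mob_comp[OF dXi dYi p] .
  have e1: "mobius (\<eta> ** matrix_inv \<xi> ** matrix_inv \<eta>) p = p1"
  proof -
    have "det (Y ** Xi) = 1" using dY dXi by (simp add: det_mul)
    then show ?thesis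
      unfolding Xi_def[symmetric] Yi_def[symmetric] unfolding Y_def[symmetric] p1_def p2_def p3_def
      using mob_comp[OF _ dYi p] mob_comp[OF dY dXi HYi[OF p]] by metis
  qed
  have Xp1: "mobius X p1 = p" using gz[OF p] assms(5) unfolding g_def p1_def p2_def p3_def by simp
  have Xp2: "mobius X p2 = p3" unfolding p2_def using cX1[OF H3] .
  have Yp3: "mobius Y p3 = p" unfolding p3_def using cY1[OF p] .
  have notid: "\<not> (\<forall>z\<in>H2. mobius g z = z)" using id_not_elliptic assms(3) g_def by blast
  have comm_case: False if fX: "mobius X p = p" and fY: "mobius Y p = p"
  proof -
    have XY: "X ** Y = Y ** X" using fix_commute[OF dX dY p fX fY] .
    have "mobius g z = z" if z: "z \<in> H2" for z
    proof -
      have w: "mobius Xi (mobius Yi z) \<in> H2" using HXi HYi z by blast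
      have "mobius X (mobius Y (mobius Xi (mobius Yi z))) = mobius Y (mobius X (mobius Xi (mobius Yi z)))"
        using mob_comp[OF dX dY w] mob_comp[OF dY dX w] XY by simp
      also have "\<dots> = z" using cX1[OF HYi[OF z]] cY1[OF z] by simp
      finally show ?thesis using gz[OF z] by simp
    qed
    then show False using notid by blast
  qed
  obtain Q where Q: "Q$1$2 = Q$2$1" "det Q < 0" "\<And>z. z \<in> G \<longleftrightarrow> z \<in> H2 \<and> FF Q z = 0"
    using geo_form[OF G(1)] by blast
  have F: "FF Q p = 0" "FF Q p3 = 0" "FF Q p2 = 0" "FF Q p1 = 0"
    using G(2-5) Q(3) e1 e2 p3_def Yi_def by auto
  show False
  proof (cases "p1 = p2")
    case True
    then have "p3 = p" using Xp1 Xp2 by simp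
    then have fY: "mobius Y p = p" using Yp3 by simp
    have fY1: "mobius Y p1 = p1" using True p1_def by simp
    show False
    proof (cases "p1 = p")
      case True
      then show False using comm_case fY Xp1 by simp
    next
      case False
      have idY: "\<forall>w\<in>H2. mobius Y w = w" using fix_two[OF dY p H1 _ fY fY1] False by auto
      have "mobius g z = z" if z: "z \<in> H2" for z
      proof -
        have a: "mobius Yi z = z" using cY1[OF z] idY HYi[OF z] by simp
        show ?thesis using gz[OF z] a idY HXi[OF z] cX1[OF z] by simp
      qed
      then show False using notid by blast
    qed
  next
    case n12: False
    show False
    proof (cases "p2 = p3")
      case True
      then have fX3: "mobius X p3 = p3" using Xp2 by simp
      have "p1 = p" using True p1_def Yp3 by simp
      then have fX: "mobius X p = p" using Xp1 by simp
      show False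
      proof (cases "p3 = p")
        case True
        then show False using comm_case fX Yp3 by simp
      next
        case False
        have idX: "\<forall>w\<in>H2. mobius X w = w" using fix_two[OF dX p H3 _ fX fX3] False by auto
        have "mobius g z = z" if z: "z \<in> H2" for z
        proof -
          have a: "\<And>w. w \<in> H2 \<Longrightarrow> mobius Xi w = w" using cX1 idX HXi by metis
          show ?thesis using gz[OF z] a idX HYi[OF z] HXi HY cY1[OF z] z by simp
        qed
        then show False using notid by blast
      qed
    next
      case n23: False
      have "FF (PB X Q) p1 = 0"
        using FF_pb[OF dX, of p1 Q] H1 Xp1 F(1) by (simp add: H2_def)
      moreover have "FF (PB X Q) p2 = 0"
        using FF_pb[OF dX, of p2 Q] H2' Xp2 F(2) by (simp add: H2_def)
      ultimately obtain s where s: "PB X Q = s *\<^sub>R Q"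
        using uniqQ[OF Q(1) PB_sym[OF Q(1)] Q(2) H1 H2' n12 F(4) F(3)] by blast
      have s2: "s^2 = 1" using scale_sq[OF dX Q(2) s] .
      have "FF (PB Y Q) p2 = 0"
        using FF_pb[OF dY, of p2 Q] H2' p1_def F(4) by (simp add: H2_def)
      moreover have "FF (PB Y Q) p3 = 0"
        using FF_pb[OF dY, of p3 Q] H3 Yp3 F(1) by (simp add: H2_def)
      ultimately obtain t where t: "PB Y Q = t *\<^sub>R Q"
        using uniqQ[OF Q(1) PB_sym[OF Q(1)] Q(2) H2' H3 n23 F(3) F(2)] by blast
      have t2: "t^2 = 1" using scale_sq[OF dY Q(2) t] .
      have sXi: "PB Xi Q = s *\<^sub>R Q"
      proof -
        have "Q = PB (X ** Xi) Q" using inv2(1)[OF dX] by (simp add: X_def Xi_def PB_id)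
        also have "\<dots> = s *\<^sub>R PB Xi Q" by (simp add: PB_comp s PB_scale)
        finally have "s *\<^sub>R Q = (s * s) *\<^sub>R PB Xi Q" by (metis scaleR_scaleR)
        then show ?thesis using s2 by (simp add: power2_eq_square)
      qed
      have tYi: "PB Yi Q = t *\<^sub>R Q"
      proof -
        have "Q = PB (Y ** Yi) Q" using inv2(1)[OF dY] by (simp add: Y_def Yi_def PB_id)
        also have "\<dots> = t *\<^sub>R PB Yi Q" by (simp add: PB_comp t PB_scale)
        finally have "t *\<^sub>R Q = (t * t) *\<^sub>R PB Yi Q" by (metis scaleR_scaleR)
        then show ?thesis using t2 by (simp add: power2_eq_square)
      qed
      have "PB g Q = (s * t * s * t) *\<^sub>R Q"
        unfolding g_def Xi_def[symmetric] Yi_def[symmetric] unfolding X_def[symmetric] Y_def[symmetric]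
        by (simp add: PB_comp s t sXi tYi PB_scale)
      also have "s * t * s * t = s^2 * t^2" by (simp add: power2_eq_square)
      finally have "PB g Q = Q" using s2 t2 by simp
      then have "(g$1$1 + g$2$2)^2 \<ge> 4" using tr_ge[OF dg Q(1,2)] by simp
      then have "\<not> elliptic g" using not_elliptic_tr[OF dg] by simp
      then show False using assms(3) g_def by simp
    qed
  qed
qed


end
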